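(* Let $\phi$ be a characteristic function and let $u\in\mathbb{R}\setminus\{0\}$ be such that $0<|\phi(u)|<1$. Let $\tilde\phi(u)\in\mathbb{C}$ be an arbitrary (possibly random) estimate of $\phi(u)$. Define $$\mathcal{Y}(u)=\log\bigl(-\log(|\phi(u)|^2)\bigr),\qquad \tilde{\mathcal{Y}}(u)=\log\bigl(-\log(T_{\omega_-,\omega_+}[|\tilde\phi|^2](u))\bigr),$$ $$\omega_\pm^*(u)=|\phi(u)|^2\Bigl(1\pm\frac{2|\log|\phi(u)||}{1+2|\log|\phi(u)||}\Bigr).$$ Then for any truncation levels $\omega_-(u),\omega_+(u)$ satisfying $$0<\omega_-(u)\le\omega_-^*(u)\le\omega_+^*(u)\le\omega_+(u)<1,$$ the following inequality holds with probability one: $$\bigl|\tilde{\mathcal{Y}}(u)-\mathcal{Y}(u)-\zeta_1(u)\bigl(|\tilde\phi(u)|^2-|\phi(u)|^2\bigr)\bigr|\le\zeta_2(u)\bigl(|\tilde\phi(u)|^2-|\phi(u)|^2\bigr)^2,$$ where $$\zeta_1(u)=2^{-1}|\phi(u)|^{-2}\log^{-1}(|\phi(u)|),\qquad \zeta_2(u)=2\max_{\xi\in\{\omega_-(u),\omega_+(u)\}}\Bigl[\frac{1+|\log\xi|}{\xi^2\log^2\xi}\Bigr].$$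
   Context: For truncation levels $0<\omega_-\le\omega_+<1$ and a real-valued function $f$, the truncation operator is $T_{\omega_-,\omega_+}[f](u)=\omega_+$ if $f(u)>\omega_+$, $=f(u)$ if $\omega_-\le f(u)\le\omega_+$, and $=\omega_-$ if $f(u)<\omega_-$ (the levels may depend on $u$). *)

theory Defs
  imports "HOL-Probability.Probability"
begin

text \<open>Truncation operator T at a fixed point u, with levels wm = omega_-(u), wp = omega_+(u).\<close>
definition trunc_op :: "real \<Rightarrow> real \<Rightarrow> real \<Rightarrow> real" where
  "trunc_op wm wp x = (if x > wp then wp else if x < wm then wm else x)"

end

theory Submission
  imports Defs
begin

definition gg :: "real \<Rightarrow> real" where "gg y = ln (- ln y)"
definition g1 :: "real \<Rightarrow> real" where "g1 y = 1 / (y * ln y)"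
definition g2 :: "real \<Rightarrow> real" where "g2 y = - (1 + ln y) / (y * ln y)^2"
definition kfn :: "real \<Rightarrow> real" where "kfn z = (1 + z) * exp (2*z) / z^2"

lemma d_gg: assumes "0 < y" "y < 1" shows "DERIV gg y :> g1 y"
proof -
  have l: "ln y < 0" using assms by simp
  have "DERIV (\<lambda>y. ln (- ln y)) y :> (1 / (- ln y)) * (- (1/y))"
    using assms l by (auto intro!: derivative_eq_intros)
  moreover have "(1 / (- ln y)) * (- (1/y)) = g1 y" using assms l by (simp add: g1_def field_simps)
  ultimately show ?thesis unfolding gg_def by simp
qed

lemma d_g1: assumes "0 < y" "y < 1" shows "DERIV g1 y :> g2 y"
proof -
  have l: "ln y < 0" using assms by simp
  have "DERIV (\<lambda>y. 1 / (y * ln y)) y :> - (1 * ln y + y * (1/y)) / (y * ln y)^2"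
    using assms l by (auto intro!: derivative_eq_intros simp: power2_eq_square field_simps)
  moreover have "- (1 * ln y + y * (1/y)) / (y * ln y)^2 = g2 y" using assms l by (simp add: g2_def field_simps)
  ultimately show ?thesis unfolding g1_def by simp
qed

lemma taylor2:
  assumes "0 < lo" "lo \<le> x" "x \<le> hi" "lo \<le> c" "c \<le> hi" "hi < 1"
  shows "\<exists>t. lo \<le> t \<and> t \<le> hi \<and> gg x = gg c + g1 c * (x - c) + g2 t / 2 * (x - c)^2"
proof (cases "x = c")
  case True then show ?thesis using assms by (intro exI[of _ c]) auto
next
  case False
  define diff where "diff = (\<lambda>m::nat. if m = 0 then gg else if m = 1 then g1 else g2)"
  have "\<forall>m t. m < 2 \<and> lo \<le> t \<and> t \<le> hi \<longrightarrow> DERIV (diff m) t :> diff (Suc m) t"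
  proof (intro allI impI)
    fix m t assume h: "m < (2::nat) \<and> lo \<le> t \<and> t \<le> hi"
    then have "m = 0 \<or> m = 1" by auto
    then show "DERIV (diff m) t :> diff (Suc m) t"
      using h assms d_gg[of t] d_g1[of t] by (auto simp: diff_def)
  qed
  from Taylor[of 2 diff gg, OF _ _ this assms(4,5,2,3) False]
  obtain t where t: "(if x < c then x < t \<and> t < c else c < t \<and> t < x)"
    "gg x = (\<Sum>m<2. (diff m c / fact m) * (x - c)^m) + (diff 2 t / fact 2) * (x - c)^2"
    by (auto simp: diff_def)
  have "lo \<le> t \<and> t \<le> hi" using t(1) assms by (auto split: if_splits)
  moreover have "gg x = gg c + g1 c * (x - c) + g2 t / 2 * (x - c)^2"
    using t(2) by (simp add: diff_def numeral_2_eq_2)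
  ultimately show ?thesis by blast
qed

lemma g2_bound: assumes "0 < y" "y < 1" shows "\<bar>g2 y\<bar> \<le> kfn (- ln y)"
proof -
  have l: "ln y < 0" using assms by simp
  have e1: "2 * - ln y = - ln (y^2)" using assms by (simp add: ln_realpow)
  have e0: "exp (2 * - ln y) = inverse (exp (ln (y^2)))" unfolding e1 exp_minus ..
  have e: "exp (2 * - ln y) = 1 / y^2" unfolding e0 using assms by (simp add: inverse_eq_divide)
  have "\<bar>g2 y\<bar> = \<bar>1 + ln y\<bar> / (y * ln y)^2" unfolding g2_def abs_divide by (simp, arith)
  also have "\<dots> \<le> (1 + - ln y) / (y * ln y)^2"
    by (rule divide_right_mono) (use l in auto)
  also have "\<dots> = kfn (- ln y)" unfolding kfn_def e using assms l by (simp add: field_simps power2_eq_square)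
  finally show ?thesis .
qed

definition kd :: "real \<Rightarrow> real" where "kd z = exp (2*z) * (2*z^2 + z - 2) / z^3"

lemma d_kk: assumes "0 < z" shows "DERIV kfn z :> kd z"
proof -
  have "DERIV (\<lambda>z. (1 + z) * exp (2*z) / z^2) z :>
     ((1 * exp (2*z) + (1 + z) * (exp (2*z) * 2)) * z^2 - (1 + z) * exp (2*z) * (2 * z)) / (z^2)^2"
    using assms by (auto intro!: derivative_eq_intros simp: power2_eq_square)
  moreover have "((1 * exp (2*z) + (1 + z) * (exp (2*z) * 2)) * z^2 - (1 + z) * exp (2*z) * (2 * z)) / (z^2)^2 = kd z"
    using assms by (simp add: kd_def field_simps power2_eq_square power3_eq_cube)
  ultimately show ?thesis unfolding kfn_def by simp
qed

lemma kd_sign: assumes "0 < c1" "c1 < c2" "kd c1 > 0" shows "kd c2 > 0"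
proof -
  have "2*c1^2 + c1 - 2 > 0" using assms(1,3) by (simp add: kd_def zero_less_divide_iff zero_less_mult_iff)
  moreover have "c1^2 < c2^2" using assms by (simp add: power_strict_mono)
  ultimately have "2*c2^2 + c2 - 2 > 0" using assms by linarith
  then show ?thesis using assms by (simp add: kd_def)
qed

lemma kk_qc: assumes "0 < z1" "z1 \<le> z" "z \<le> z2" shows "kfn z \<le> max (kfn z1) (kfn z2)"
proof (rule ccontr)
  assume "\<not> ?thesis"
  then have h1: "kfn z > kfn z1" and h2: "kfn z > kfn z2" by auto
  then have lt1: "z1 < z" and lt2: "z < z2" using assms by (auto simp: order.order_iff_strict)
  obtain c1 where c1: "z1 < c1" "c1 < z" "kfn z - kfn z1 = (z - z1) * kd c1"
    using MVT2[OF lt1, of kfn kd] d_kk assms by force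
  obtain c2 where c2: "z < c2" "c2 < z2" "kfn z2 - kfn z = (z2 - z) * kd c2"
    using MVT2[OF lt2, of kfn kd] d_kk assms by force
  have "kd c1 > 0" using c1 h1 lt1 by (metis diff_gt_0_iff_gt zero_less_mult_pos)
  then have "kd c2 > 0" using kd_sign[of c1 c2] c1 c2 assms by linarith
  then have "kfn z2 - kfn z > 0" using c2 lt2 by simp
  then show False using h2 by simp
qed


lemma kk_eq: assumes "0 < y" "y < 1" shows "kfn (- ln y) = (1 + \<bar>ln y\<bar>) / (y^2 * (ln y)^2)"
proof -
  have l: "ln y < 0" using assms by simp
  have e1: "2 * - ln y = - ln (y^2)" using assms by (simp add: ln_realpow)
  have e0: "exp (2 * - ln y) = inverse (exp (ln (y^2)))" unfolding e1 exp_minus ..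
  have e: "exp (2 * - ln y) = 1 / y^2" unfolding e0 using assms by (simp add: inverse_eq_divide)
  show ?thesis unfolding kfn_def e using assms l by (simp add: field_simps power2_eq_square)
qed

lemma core:
  fixes p L wm wp x H :: real
  assumes p: "0 < p" "p < 1" and L: "L = - ln p"
    and w: "0 < wm" "wm \<le> p - p*L/(1+L)" "p + p*L/(1+L) \<le> wp" "wp < 1"
    and H: "H = max (kfn (- ln wm)) (kfn (- ln wp))"
  shows "\<bar>gg (trunc_op wm wp x) - gg p - g1 p * (x - p)\<bar> \<le> 2 * H * (x - p)^2"
proof -
  define d where "d = p*L/(1+L)"
  have Lpos: "L > 0" using p L by simp
  have dpos: "d > 0" using p Lpos by (simp add: d_def)
  have wmp: "wm \<le> p" "p \<le> wp" using w dpos unfolding d_def by linarith+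
  have HB: "\<bar>g2 t\<bar> \<le> H" if "wm \<le> t" "t \<le> wp" for t
  proof -
    have "0 < t" "t < 1" using that w by auto
    have "- ln wp \<le> - ln t" "- ln t \<le> - ln wm" using that w by auto
    moreover have "0 < - ln wp" using w wmp p by simp
    ultimately have "kfn (- ln t) \<le> H" unfolding H by (metis kk_qc max.commute)
    then show ?thesis using g2_bound[OF \<open>0 < t\<close> \<open>t < 1\<close>] by linarith
  qed
  have Hp: "kfn L \<le> H"
  proof -
    have "- ln wp \<le> - ln p" "- ln p \<le> - ln wm" using wmp w p by auto
    moreover have "0 < - ln wp" using w wmp p by simp
    ultimately show ?thesis unfolding H L by (metis kk_qc max.commute)
  qed
  have kkL: "kfn L = (1+L)/(p^2*L^2)" using kk_eq[OF p] L Lpos by simp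
  have g1p: "\<bar>g1 p\<bar> = 1/(p*L)" using L Lpos p by (simp add: g1_def abs_mult)
  have key: "\<bar>g1 p\<bar> * \<bar>x - p\<bar> \<le> H * (x - p)^2" if "\<bar>x - p\<bar> \<ge> d"
  proof -
    have "\<bar>g1 p\<bar> * \<bar>x - p\<bar> = kfn L * d * \<bar>x - p\<bar>"
    proof -
      have f: "(1+L)/(p^2*L^2)*(p*L/(1+L)) = 1/(p*L)" using p Lpos
        by (simp add: divide_simps power2_eq_square)
      show ?thesis unfolding g1p kkL d_def f[symmetric] by simp
    qed
    also have "\<dots> \<le> kfn L * \<bar>x - p\<bar> * \<bar>x - p\<bar>"
    proof -
      have "kfn L \<ge> 0" using kkL p Lpos by simp
      then show ?thesis using that by (intro mult_right_mono mult_left_mono) auto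
    qed
    also have "\<dots> \<le> H * \<bar>x - p\<bar> * \<bar>x - p\<bar>"
      using Hp by (simp add: mult_right_mono)
    finally show ?thesis by (simp add: power2_eq_square mult.assoc)
  qed
  have "kfn L \<ge> 0" using kkL p Lpos by simp
  then have Hnn: "H \<ge> 0" using Hp by linarith
  consider "x > wp" | "x < wm" | "wm \<le> x \<and> x \<le> wp" by linarith
  then show ?thesis
  proof cases
    case 3
    then have tr: "trunc_op wm wp x = x" by (simp add: trunc_op_def)
    obtain t where t: "wm \<le> t" "t \<le> wp" "gg x = gg p + g1 p * (x - p) + g2 t / 2 * (x - p)^2"
      using taylor2[of wm x wp p] 3 w wmp by auto
    have "\<bar>gg x - gg p - g1 p * (x - p)\<bar> = \<bar>g2 t\<bar> / 2 * (x - p)^2"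
      using t(3) by (simp add: abs_mult)
    also have "\<dots> \<le> H / 2 * (x - p)^2" using HB[OF t(1,2)] by (simp add: mult_right_mono)
    also have "\<dots> \<le> 2 * H * (x - p)^2" using Hnn by (simp add: mult_right_mono)
    finally show ?thesis using tr by simp
  next
    case 1
    then have tr: "trunc_op wm wp x = wp" by (simp add: trunc_op_def)
    obtain t where t: "wm \<le> t" "t \<le> wp" "gg wp = gg p + g1 p * (wp - p) + g2 t / 2 * (wp - p)^2"
      using taylor2[of wm wp wp p] w wmp by auto
    have e: "gg wp - gg p - g1 p * (x - p) = g2 t / 2 * (wp - p)^2 - g1 p * (x - wp)"
      using t(3) by (simp add: algebra_simps)
    have dd: "\<bar>x - p\<bar> \<ge> d" using 1 w unfolding d_def by linarith
    have a1: "\<bar>g2 t / 2 * (wp - p)^2\<bar> \<le> H / 2 * (x - p)^2"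
    proof -
      have "\<bar>g2 t / 2 * (wp - p)^2\<bar> = \<bar>g2 t\<bar> / 2 * (wp - p)^2" by (simp add: abs_mult)
      also have "\<dots> \<le> H / 2 * (wp - p)^2" using HB[OF t(1,2)] by (simp add: mult_right_mono)
      also have "\<dots> \<le> H / 2 * (x - p)^2" using Hnn 1 wmp
        by (intro mult_left_mono power_mono) auto
      finally show ?thesis .
    qed
    have a2: "\<bar>g1 p * (x - wp)\<bar> \<le> H * (x - p)^2"
    proof -
      have "\<bar>g1 p * (x - wp)\<bar> = \<bar>g1 p\<bar> * \<bar>x - wp\<bar>" by (simp add: abs_mult)
      also have "\<dots> \<le> \<bar>g1 p\<bar> * \<bar>x - p\<bar>" using 1 wmp by (intro mult_left_mono) auto
      finally show ?thesis using key[OF dd] by linarith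
    qed
    have HX: "H * (x - p)^2 \<ge> 0" using Hnn by simp
    have "\<bar>g2 t / 2 * (wp - p)^2 - g1 p * (x - wp)\<bar> \<le> 2 * H * (x - p)^2"
      using a1 a2 HX abs_triangle_ineq4[of "g2 t / 2 * (wp - p)^2" "g1 p * (x - wp)"] by linarith
    then show ?thesis using tr e by simp
  next
    case 2
    then have tr: "trunc_op wm wp x = wm" using wmp by (simp add: trunc_op_def)
    obtain t where t: "wm \<le> t" "t \<le> wp" "gg wm = gg p + g1 p * (wm - p) + g2 t / 2 * (wm - p)^2"
      using taylor2[of wm wm wp p] w wmp by auto
    have e: "gg wm - gg p - g1 p * (x - p) = g2 t / 2 * (wm - p)^2 - g1 p * (x - wm)"
      using t(3) by (simp add: algebra_simps)
    have dd: "\<bar>x - p\<bar> \<ge> d" using 2 w unfolding d_def by linarith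
    have a1: "\<bar>g2 t / 2 * (wm - p)^2\<bar> \<le> H / 2 * (x - p)^2"
    proof -
      have "\<bar>g2 t / 2 * (wm - p)^2\<bar> = \<bar>g2 t\<bar> / 2 * (wm - p)^2" by (simp add: abs_mult)
      also have "\<dots> \<le> H / 2 * (wm - p)^2" using HB[OF t(1,2)] by (simp add: mult_right_mono)
      also have "\<dots> \<le> H / 2 * (x - p)^2"
      proof -
        have "(p - wm)^2 \<le> (p - x)^2" using 2 wmp by (intro power_mono) auto
        then have "(wm - p)^2 \<le> (x - p)^2" by (simp add: power2_commute)
        then show ?thesis using Hnn by (simp add: mult_left_mono)
      qed
      finally show ?thesis .
    qed
    have a2: "\<bar>g1 p * (x - wm)\<bar> \<le> H * (x - p)^2"
    proof -
      have "\<bar>g1 p * (x - wm)\<bar> = \<bar>g1 p\<bar> * \<bar>x - wm\<bar>" by (simp add: abs_mult)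
      also have "\<dots> \<le> \<bar>g1 p\<bar> * \<bar>x - p\<bar>" using 2 wmp by (intro mult_left_mono) auto
      finally show ?thesis using key[OF dd] by linarith
    qed
    have HX: "H * (x - p)^2 \<ge> 0" using Hnn by simp
    have "\<bar>g2 t / 2 * (wm - p)^2 - g1 p * (x - wm)\<bar> \<le> 2 * H * (x - p)^2"
      using a1 a2 HX abs_triangle_ineq4[of "g2 t / 2 * (wm - p)^2" "g1 p * (x - wm)"] by linarith
    then show ?thesis using tr e by simp
  qed
qed

theorem lemma6p1:
  fixes M :: "real measure" and u :: real and est :: complex and wm wp :: real
  assumes "real_distribution M"
    and "u \<noteq> 0"
    and "0 < cmod (char M u)" and "cmod (char M u) < 1"
  defines "Y \<equiv> ln (- ln ((cmod (char M u))\<^sup>2))"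
    and "Yt \<equiv> ln (- ln (trunc_op wm wp ((cmod est)\<^sup>2)))"
    and "om_minus \<equiv> (cmod (char M u))\<^sup>2 *
           (1 - 2 * \<bar>ln (cmod (char M u))\<bar> / (1 + 2 * \<bar>ln (cmod (char M u))\<bar>))"
    and "om_plus \<equiv> (cmod (char M u))\<^sup>2 *
           (1 + 2 * \<bar>ln (cmod (char M u))\<bar> / (1 + 2 * \<bar>ln (cmod (char M u))\<bar>))"
    and "zeta1 \<equiv> 1 / (2 * (cmod (char M u))\<^sup>2 * ln (cmod (char M u)))"
    and "zeta2 \<equiv> 2 * max ((1 + \<bar>ln wm\<bar>) / (wm\<^sup>2 * (ln wm)\<^sup>2))
                          ((1 + \<bar>ln wp\<bar>) / (wp\<^sup>2 * (ln wp)\<^sup>2))"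
  assumes "0 < wm" and "wm \<le> om_minus" and "om_minus \<le> om_plus"
    and "om_plus \<le> wp" and "wp < 1"
  shows "\<bar>Yt - Y - zeta1 * ((cmod est)\<^sup>2 - (cmod (char M u))\<^sup>2)\<bar>
           \<le> zeta2 * ((cmod est)\<^sup>2 - (cmod (char M u))\<^sup>2)\<^sup>2"
proof -
  define c where "c = cmod (char M u)"
  define p where "p = c^2"
  define L where "L = 2 * \<bar>ln c\<bar>"
  define H where "H = max (kfn (- ln wm)) (kfn (- ln wp))"
  have c: "0 < c" "c < 1" using assms(3,4) by (auto simp: c_def)
  have lc: "ln c < 0" using c by simp
  have p: "0 < p" "p < 1" using c by (auto simp: p_def power_less_one_iff)
  have lnp: "ln p = 2 * ln c" using c by (simp add: p_def ln_realpow)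
  have L: "L = - ln p" using lnp lc by (simp add: L_def)
  have omm: "om_minus = p - p*L/(1+L)" unfolding om_minus_def p_def L_def c_def[symmetric]
    by (simp add: algebra_simps)
  have omp: "om_plus = p + p*L/(1+L)" unfolding om_plus_def p_def L_def c_def[symmetric]
    by (simp add: algebra_simps)
  have wp0: "0 < wp" using \<open>0 < wm\<close> \<open>wm \<le> om_minus\<close> \<open>om_minus \<le> om_plus\<close> \<open>om_plus \<le> wp\<close> \<open>wp < 1\<close> by linarith
  have core': "\<bar>gg (trunc_op wm wp ((cmod est)\<^sup>2)) - gg p - g1 p * ((cmod est)\<^sup>2 - p)\<bar>
      \<le> 2 * H * ((cmod est)\<^sup>2 - p)^2"
    by (rule core[OF p L]) (use \<open>0 < wm\<close> \<open>wm \<le> om_minus\<close> \<open>om_minus \<le> om_plus\<close> \<open>om_plus \<le> wp\<close> \<open>wp < 1\<close> omm omp H_def in auto)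
  have "Y = gg p" unfolding Y_def gg_def p_def c_def ..
  moreover have "Yt = gg (trunc_op wm wp ((cmod est)\<^sup>2))" unfolding Yt_def gg_def ..
  moreover have "zeta1 = g1 p" unfolding zeta1_def g1_def lnp unfolding p_def c_def
    by (simp add: algebra_simps)
  moreover have "zeta2 = 2 * H" unfolding zeta2_def H_def
    using kk_eq[of wm] kk_eq[of wp] \<open>0 < wm\<close> \<open>wm \<le> om_minus\<close> \<open>om_minus \<le> om_plus\<close> \<open>om_plus \<le> wp\<close> \<open>wp < 1\<close> wp0 by simp
  ultimately show ?thesis using core' unfolding p_def c_def by simp
qed

end
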